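(* Let $k=k(N)$ satisfy $k=o(N)$. There exists a constant $C>0$ such that for all $N$, all $j\in[N]$, all $y\in[N-1]$ and all $\sigma\in\mathcal S_N$, $$\big|(-\tilde{\mathcal L}\Phi^{(j)}_{N,y})(\sigma)-\lambda^{(j)}_{N,k}\,\Phi^{(j)}_{N,y}(\sigma)\big|\le C\,k^6 j^3 N^{-3}.$$
   Context: Decks, $\eta^{\sigma,i,j}$, and the generator $\tilde{\mathcal L}$ of the $S_k$ shuffle with boundaries: $\mathcal S_N$ is the symmetric group on $[N]$, $\eta(m)$ the label at position $m$; $\eta^{\sigma,i,j}$ rearranges positions $i,\dots,j$ by $\sigma\in\mathcal S_{j-i+1}$ ($\eta^{\sigma,i,j}(m)=\eta(i-1+\sigma(m-i+1))$ for $m\in[i,j]$, unchanged elsewhere); $(\mathcal Lf)(\eta)=\sum_{i=1}^{N-k+1}\frac1{k!}\sum_{\sigma\in\mathcal S_k}(f(\eta^{\sigma,i,i+k-1})-f(\eta))$; $\delta^{(k)}_j=\frac{k^2+3j^2-1}{(2j+1)(2j-1)}$ for $2\le j\le k-1$; $(\tilde{\mathcal L}f)(\zeta)=(\mathcal Lf)(\zeta)+\sum_{j=2}^{k-1}\frac{\delta^{(k)}_j}{j!}\sum_{\sigma\in\mathcal S_j}(f(\zeta^{\sigma,1,j})+f(\zeta^{\sigma,N-j+1,N})-2f(\zeta))$. Height function: $h_\sigma(x,y)=\sum_{z=1}^x\mathbf 1\{\sigma(z)\le y\}-\frac{xy}{N}$. Approximate eigenfunctions: $\Phi^{(j)}_{N,y}(\sigma)=\sum_{x=1}^{N-1}h_\sigma(x,y)\psi_j(x)$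 with $\psi_j(x)=\sin(xj\pi/N)$. Approximate eigenvalues: $\lambda^{(j)}_{N,k}=(k-1)-2\sum_{i=1}^{k}\frac{k-i}{k}\cos\!\big(\frac{ij\pi}{N}\big)$. *)

theory Defs
  imports "HOL-Analysis.Analysis" "HOL-Combinatorics.Permutations" "HOL-Library.Landau_Symbols"
begin

text \<open>Decks are functions nat \<Rightarrow> nat; a deck of size N is a permutation of {1..N}
  (eta m = label at position m). S_k = permutations of {1..k}.\<close>

definition rearr :: "(nat \<Rightarrow> nat) \<Rightarrow> (nat \<Rightarrow> nat) \<Rightarrow> nat \<Rightarrow> nat \<Rightarrow> (nat \<Rightarrow> nat)" where
  "rearr \<eta> \<sigma> i j = (\<lambda>m. if i \<le> m \<and> m \<le> j then \<eta> (i - 1 + \<sigma> (m + 1 - i)) else \<eta> m)"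

definition gen_L :: "nat \<Rightarrow> nat \<Rightarrow> ((nat \<Rightarrow> nat) \<Rightarrow> real) \<Rightarrow> (nat \<Rightarrow> nat) \<Rightarrow> real" where
  "gen_L N k f \<eta> = (\<Sum>i\<in>{i. 1 \<le> i \<and> i + k - 1 \<le> N}.
      (1 / fact k) * (\<Sum>\<sigma>\<in>{\<sigma>. \<sigma> permutes {1..k}}. f (rearr \<eta> \<sigma> i (i + k - 1)) - f \<eta>))"

definition delta :: "nat \<Rightarrow> nat \<Rightarrow> real" where
  "delta k j = (real k ^ 2 + 3 * real j ^ 2 - 1) / ((2 * real j + 1) * (2 * real j - 1))"

definition gen_Lt :: "nat \<Rightarrow> nat \<Rightarrow> ((nat \<Rightarrow> nat) \<Rightarrow> real) \<Rightarrow> (nat \<Rightarrow> nat) \<Rightarrow> real" where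
  "gen_Lt N k f \<zeta> = gen_L N k f \<zeta> +
     (\<Sum>j = 2..k - 1. delta k j / fact j *
        (\<Sum>\<sigma>\<in>{\<sigma>. \<sigma> permutes {1..j}}.
            f (rearr \<zeta> \<sigma> 1 j) + f (rearr \<zeta> \<sigma> (N - j + 1) N) - 2 * f \<zeta>))"

definition height :: "nat \<Rightarrow> (nat \<Rightarrow> nat) \<Rightarrow> nat \<Rightarrow> nat \<Rightarrow> real" where
  "height N \<sigma> x y = (\<Sum>z = 1..x. if \<sigma> z \<le> y then 1 else 0) - real x * real y / real N"

definition Phi :: "nat \<Rightarrow> nat \<Rightarrow> nat \<Rightarrow> (nat \<Rightarrow> nat) \<Rightarrow> real" where
  "Phi N j y \<sigma> = (\<Sum>x = 1..N - 1. height N \<sigma> x y * sin (real x * real j * pi / real N))"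

definition eigval :: "nat \<Rightarrow> nat \<Rightarrow> nat \<Rightarrow> real" where
  "eigval N k j = (real k - 1) - 2 * (\<Sum>i = 1..k. (real k - real i) / real k * cos (real i * real j * pi / real N))"

end

theory Submission
  imports Defs
begin


lemma perm_avg:
  fixes f :: "'a \<Rightarrow> real"
  assumes S: "finite S" and t: "t \<in> S"
  shows "real (card S) * (\<Sum>\<sigma>\<in>{\<sigma>. \<sigma> permutes S}. f (\<sigma> t)) = fact (card S) * (\<Sum>u\<in>S. f u)"
proof -
  let ?P = "{\<sigma>. \<sigma> permutes S}"
  have eq: "(\<Sum>\<sigma>\<in>?P. f (\<sigma> t)) = (\<Sum>\<sigma>\<in>?P. f (\<sigma> t'))" if t': "t' \<in> S" for t'
  proof -
    have "(\<Sum>\<sigma>\<in>?P. f (\<sigma> t)) = (\<Sum>p\<in>?P. f ((p \<circ> Transposition.transpose t t') t))"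
      using sum_permutations_compose_right[OF permutes_swap_id[OF t t'], of "\<lambda>\<sigma>. f (\<sigma> t)"] by simp
    also have "\<dots> = (\<Sum>\<sigma>\<in>?P. f (\<sigma> t'))" by simp
    finally show ?thesis .
  qed
  have "real (card S) * (\<Sum>\<sigma>\<in>?P. f (\<sigma> t)) = (\<Sum>t'\<in>S. \<Sum>\<sigma>\<in>?P. f (\<sigma> t'))"
  proof -
    have "(\<Sum>t'\<in>S. \<Sum>\<sigma>\<in>?P. f (\<sigma> t')) = (\<Sum>t'\<in>S. \<Sum>\<sigma>\<in>?P. f (\<sigma> t))"
      by (rule sum.cong[OF refl]) (use eq in auto)
    then show ?thesis by simp
  qed
  also have "\<dots> = (\<Sum>\<sigma>\<in>?P. \<Sum>t'\<in>S. f (\<sigma> t'))" by (rule sum.swap)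
  also have "\<dots> = (\<Sum>\<sigma>\<in>?P. \<Sum>u\<in>S. f u)"
  proof (rule sum.cong[OF refl])
    fix \<sigma> assume "\<sigma> \<in> ?P"
    then have "\<sigma> permutes S" by simp
    from sum.permute[OF this, of f] show "(\<Sum>t'\<in>S. f (\<sigma> t')) = sum f S" by (simp add: comp_def)
  qed
  also have "\<dots> = fact (card S) * (\<Sum>u\<in>S. f u)"
    using card_permutations[OF refl S] by simp
  finally show ?thesis .
qed



definition cnt :: "(nat \<Rightarrow> nat) \<Rightarrow> nat \<Rightarrow> nat \<Rightarrow> real" where
  "cnt \<eta> y x = (\<Sum>z=1..x. if \<eta> z \<le> y then 1 else 0)"

lemma height_cnt: "height N \<eta> x y = cnt \<eta> y x - real x * real y / real N"
  by (simp add: height_def cnt_def)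

definition W :: "(real \<Rightarrow> real) \<Rightarrow> nat \<Rightarrow> nat \<Rightarrow> (nat \<Rightarrow> real) \<Rightarrow> real" where
  "W psi n p g = (\<Sum>s=1..n-1. psi (real (p+s)) *
      ((1 - real s / real n) * g p + real s / real n * g (p+n) - g (p+s)))"

lemma cnt_shift: "cnt \<eta> y (p + u) = cnt \<eta> y p + (\<Sum>v=1..u. if \<eta> (p+v) \<le> y then 1 else 0)"
  by (induction u) (auto simp: cnt_def)

lemma rearr_eq: "rearr \<eta> \<sigma> (Suc p) (p+n) z = (if p < z \<and> z \<le> p+n then \<eta> (p + \<sigma> (z - p)) else \<eta> z)"
  by (auto simp: rearr_def)

lemma avg_cnt:
  fixes \<eta> :: "nat \<Rightarrow> nat" and y p n x :: nat
  assumes n: "1 \<le> n"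
  defines "m \<equiv> (\<Sum>u=1..n. if \<eta> (p+u) \<le> y then 1 else 0) / real n"
  shows "(1 / fact n) * (\<Sum>\<sigma>\<in>{\<sigma>. \<sigma> permutes {1..n}}. cnt (rearr \<eta> \<sigma> (p+1) (p+n)) y x)
     = (\<Sum>z=1..x. if p < z \<and> z \<le> p+n then m else (if \<eta> z \<le> y then 1 else 0))"
proof -
  let ?P = "{\<sigma>. \<sigma> permutes {1..n::nat}}"
  let ?J = "\<lambda>l. if l \<le> y then 1 else (0::real)"
  have cardP: "card ?P = fact n" using card_permutations[of "{1..n}" n] by simp
  have z: "(1 / fact n) * (\<Sum>\<sigma>\<in>?P. ?J (rearr \<eta> \<sigma> (p+1) (p+n) z))
      = (if p < z \<and> z \<le> p+n then m else ?J (\<eta> z))" for z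
  proof (cases "p < z \<and> z \<le> p+n")
    case True
    have t: "z - p \<in> {1..n}" using True by auto
    have "real (card {1..n}) * (\<Sum>\<sigma>\<in>?P. (\<lambda>u. ?J (\<eta> (p+u))) (\<sigma> (z-p))) = fact (card {1..n}) * (\<Sum>u\<in>{1..n}. ?J (\<eta> (p+u)))"
      by (rule perm_avg[OF _ t]) simp
    then have "real n * (\<Sum>\<sigma>\<in>?P. ?J (\<eta> (p + \<sigma> (z-p)))) = fact n * (\<Sum>u=1..n. ?J (\<eta> (p+u)))" by simp
    moreover have "(\<Sum>\<sigma>\<in>?P. ?J (rearr \<eta> \<sigma> (p+1) (p+n) z)) = (\<Sum>\<sigma>\<in>?P. ?J (\<eta> (p + \<sigma> (z-p))))"
      using True by (simp add: rearr_eq)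
    ultimately show ?thesis using True n unfolding m_def
      by (simp add: field_simps)
  next
    case False
    then have "(\<Sum>\<sigma>\<in>?P. ?J (rearr \<eta> \<sigma> (p+1) (p+n) z)) = (\<Sum>\<sigma>\<in>?P. ?J (\<eta> z))"
      by (intro sum.cong) (auto simp: rearr_eq)
    also have "\<dots> = fact n * ?J (\<eta> z)" using cardP by simp
    finally have "(\<Sum>\<sigma>\<in>?P. ?J (rearr \<eta> \<sigma> (p+1) (p+n) z)) = fact n * ?J (\<eta> z)" .
    then show ?thesis unfolding if_not_P[OF False] by simp
  qed
  have "(1 / fact n) * (\<Sum>\<sigma>\<in>?P. cnt (rearr \<eta> \<sigma> (p+1) (p+n)) y x)
      = (\<Sum>z=1..x. (1 / fact n) * (\<Sum>\<sigma>\<in>?P. ?J (rearr \<eta> \<sigma> (p+1) (p+n) z)))"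
    unfolding cnt_def by (simp add: sum_distrib_left) (rule sum.swap)
  also have "\<dots> = (\<Sum>z=1..x. if p < z \<and> z \<le> p+n then m else ?J (\<eta> z))"
    using z by simp
  finally show ?thesis .
qed

lemma sum_aI:
  fixes \<eta> :: "nat \<Rightarrow> nat" and y p n :: nat and m :: real
  defines "I \<equiv> \<lambda>z. if \<eta> z \<le> y then 1 else (0::real)"
  assumes m: "real n * m = cnt \<eta> y (p+n) - cnt \<eta> y p"
  shows "(\<Sum>z=1..x. if p < z \<and> z \<le> p+n then m else I z)
     = (if x \<le> p then cnt \<eta> y x else if x \<le> p + n then cnt \<eta> y p + real (x - p) * m else cnt \<eta> y x)"
proof (induction x)
  case 0 then show ?case by (simp add: cnt_def)
next
  case (Suc x)
  have s: "(\<Sum>z=1..Suc x. if p < z \<and> z \<le> p+n then m else I z) =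
     (\<Sum>z=1..x. if p < z \<and> z \<le> p+n then m else I z) + (if p < Suc x \<and> Suc x \<le> p+n then m else I (Suc x))"
    by simp
  have c: "cnt \<eta> y (Suc x) = cnt \<eta> y x + I (Suc x)" by (simp add: cnt_def I_def)
  show ?case
  proof (cases "Suc x \<le> p")
    case True then show ?thesis using s c Suc by simp
  next
    case F1: False
    show ?thesis
    proof (cases "Suc x \<le> p + n")
      case True
      then have "x \<le> p + n" by simp
      show ?thesis
      proof (cases "x \<le> p")
        case True then have "x = p" using F1 by simp
        then show ?thesis using s Suc F1 \<open>Suc x \<le> p + n\<close> by simp
      next
        case False
        then show ?thesis using s Suc F1 \<open>Suc x \<le> p + n\<close> \<open>x \<le> p + n\<close>
          by (simp add: Suc_diff_le algebra_simps)
      qed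
    next
      case False
      show ?thesis
      proof (cases "x = p + n")
        case True
        then show ?thesis using s Suc F1 False c m
          by (cases "n = 0") (simp_all add: algebra_simps)
      next
        case False
        then show ?thesis using s Suc F1 \<open>\<not> Suc x \<le> p + n\<close> c by simp
      qed
    qed
  qed
qed



lemma window_avg:
  fixes \<eta> :: "nat \<Rightarrow> nat" and N j y p n :: nat
  assumes n: "1 \<le> n" and pn: "p + n \<le> N"
  shows "(1 / fact n) * (\<Sum>\<sigma>\<in>{\<sigma>. \<sigma> permutes {1..n}}. Phi N j y (rearr \<eta> \<sigma> (p+1) (p+n)) - Phi N j y \<eta>)
    = W (\<lambda>t. sin (t * real j * pi / real N)) n p (\<lambda>x. height N \<eta> x y)"
proof -
  let ?P = "{\<sigma>. \<sigma> permutes {1..n::nat}}"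
  let ?psi = "\<lambda>t. sin (t * real j * pi / real N)"
  let ?c = "cnt \<eta> y"
  define m where "m = (\<Sum>u=1..n. if \<eta> (p+u) \<le> y then 1 else 0) / real n"
  have nm: "real n * m = ?c (p+n) - ?c p" using n by (simp add: m_def cnt_shift)
  define A where "A x = (if x \<le> p then ?c x else if x \<le> p + n then ?c p + real (x - p) * m else ?c x)" for x
  have avg: "(1 / fact n) * (\<Sum>\<sigma>\<in>?P. cnt (rearr \<eta> \<sigma> (p+1) (p+n)) y x) = A x" for x
    using avg_cnt[OF n, of \<eta> p y x] sum_aI[OF nm] unfolding A_def m_def by simp
  have cardP: "card ?P = fact n" using card_permutations[of "{1..n}" n] by simp
  have cardP': "real (card {\<sigma>. \<sigma> permutes {Suc 0..n}}) = fact n" using cardP by simp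
  have diff: "Phi N j y \<eta>' - Phi N j y \<eta> = (\<Sum>x=1..N-1. (cnt \<eta>' y x - ?c x) * ?psi (real x))" for \<eta>'
    unfolding Phi_def height_cnt by (simp add: sum_subtractf[symmetric] algebra_simps)
  have "(1 / fact n) * (\<Sum>\<sigma>\<in>?P. Phi N j y (rearr \<eta> \<sigma> (p+1) (p+n)) - Phi N j y \<eta>)
      = (1 / fact n) * (\<Sum>\<sigma>\<in>?P. \<Sum>x=1..N-1. (cnt (rearr \<eta> \<sigma> (p+1) (p+n)) y x - ?c x) * ?psi (real x))"
    by (simp add: diff)
  also have "\<dots> = (\<Sum>x=1..N-1. (1 / fact n) * (\<Sum>\<sigma>\<in>?P. (cnt (rearr \<eta> \<sigma> (p+1) (p+n)) y x - ?c x) * ?psi (real x)))"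
    by (simp add: sum_distrib_left) (rule sum.swap)
  also have "\<dots> = (\<Sum>x=1..N-1. (A x - ?c x) * ?psi (real x))"
  proof (rule sum.cong[OF refl])
    fix x
    have "(\<Sum>\<sigma>\<in>?P. (cnt (rearr \<eta> \<sigma> (p+1) (p+n)) y x - ?c x) * ?psi (real x))
       = ((\<Sum>\<sigma>\<in>?P. cnt (rearr \<eta> \<sigma> (p+1) (p+n)) y x) - fact n * ?c x) * ?psi (real x)"
      by (simp add: sum_distrib_right[symmetric] sum_subtractf cardP')
    then show "(1 / fact n) * (\<Sum>\<sigma>\<in>?P. (cnt (rearr \<eta> \<sigma> (p+1) (p+n)) y x - ?c x) * ?psi (real x))
       = (A x - ?c x) * ?psi (real x)"
      using avg[of x] by (simp add: field_simps)
  qed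
  also have "\<dots> = (\<Sum>x=p+1..p+n-1. (A x - ?c x) * ?psi (real x))"
  proof (rule sum.mono_neutral_right)
    show "{p+1..p+n-1} \<subseteq> {1..N-1}" using pn n by auto
    show "\<forall>i\<in>{1..N - 1} - {p + 1..p + n - 1}. (A i - ?c i) * ?psi (real i) = 0"
    proof
      fix i assume i: "i \<in> {1..N - 1} - {p + 1..p + n - 1}"
      have "A i = ?c i"
      proof (cases "i = p + n")
        case True then show ?thesis using nm n unfolding A_def by (simp add: algebra_simps)
      next
        case False then show ?thesis using i unfolding A_def by auto
      qed
      then show "(A i - ?c i) * ?psi (real i) = 0" by simp
    qed
  qed simp
  also have "\<dots> = (\<Sum>s=1..n-1. (A (s+p) - ?c (s+p)) * ?psi (real (s+p)))"
    using sum.shift_bounds_cl_nat_ivl[of "\<lambda>x. (A x - ?c x) * ?psi (real x)" 1 p "n-1"] n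
    by (simp add: add.commute)
  also have "\<dots> = W ?psi n p (\<lambda>x. height N \<eta> x y)"
    unfolding W_def
  proof (rule sum.cong[OF refl])
    fix s assume s: "s \<in> {1..n-1}"
    have Aeq: "A (s+p) = ?c p + real s * m" using s unfolding A_def by auto
    have cpn: "?c (p+n) = ?c p + real n * m" using nm by simp
    have hq: "height N \<eta> x y = ?c x - real x * (real y / real N)" for x
      unfolding height_cnt by simp
    have lin: "(1 - s'/n')*(cp - p'*q) + s'/n'*((cp + n'*m') - (p'+n')*q) - (cs - (p'+s')*q) = cp + s'*m' - cs"
      if "n' \<noteq> 0" for n' s' cp p' q m' cs :: real
      using that by (simp add: field_simps)
    have key: "A (s+p) - ?c (s+p) = (1 - real s / real n) * height N \<eta> p y + real s / real n * height N \<eta> (p+n) y - height N \<eta> (p+s) y"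
      unfolding hq Aeq cpn using lin[of "real n" "real s" "?c p" "real p" "real y / real N" m "?c (p+s)"] n
      by (simp add: add.commute)
    show "(A (s+p) - ?c (s+p)) * ?psi (real (s+p)) =
      ?psi (real (p+s)) * ((1 - real s / real n) * height N \<eta> p y + real s / real n * height N \<eta> (p+n) y - height N \<eta> (p+s) y)"
      unfolding key by (simp add: add.commute mult.commute)
  qed
  finally show ?thesis .
qed



lemma gen_Lt_eq:
  fixes \<eta> :: "nat \<Rightarrow> nat" and N j y k :: nat
  assumes k: "1 \<le> k" and kN: "k \<le> N"
  defines "psi \<equiv> (\<lambda>t. sin (t * real j * pi / real N))"
  defines "g \<equiv> (\<lambda>x. height N \<eta> x y)"
  shows "gen_Lt N k (Phi N j y) \<eta> = (\<Sum>p=0..N-k. W psi k p g)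
     + (\<Sum>jj=2..k-1. delta k jj * (W psi jj 0 g + W psi jj (N-jj) g))"
proof -
  have "gen_L N k (Phi N j y) \<eta> = (\<Sum>i\<in>{1..N-k+1}. (1 / fact k) *
      (\<Sum>\<sigma>\<in>{\<sigma>. \<sigma> permutes {1..k}}. Phi N j y (rearr \<eta> \<sigma> i (i + k - 1)) - Phi N j y \<eta>))"
    unfolding gen_L_def using k kN by (intro sum.cong) auto
  also have "\<dots> = (\<Sum>p=0..N-k. (1 / fact k) *
      (\<Sum>\<sigma>\<in>{\<sigma>. \<sigma> permutes {1..k}}. Phi N j y (rearr \<eta> \<sigma> (p+1) (p + k)) - Phi N j y \<eta>))"
    using sum.shift_bounds_cl_nat_ivl[of "\<lambda>i. (1 / fact k) *
      (\<Sum>\<sigma>\<in>{\<sigma>. \<sigma> permutes {1..k}}. Phi N j y (rearr \<eta> \<sigma> i (i + k - 1)) - Phi N j y \<eta>)" 0 1 "N-k"] k kN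
    by simp
  also have "\<dots> = (\<Sum>p=0..N-k. W psi k p g)"
    by (rule sum.cong[OF refl]) (use window_avg[OF k] kN in \<open>auto simp: psi_def g_def\<close>)
  finally have L: "gen_L N k (Phi N j y) \<eta> = (\<Sum>p=0..N-k. W psi k p g)" .
  have B: "delta k jj / fact jj * (\<Sum>\<sigma>\<in>{\<sigma>. \<sigma> permutes {1..jj}}.
            Phi N j y (rearr \<eta> \<sigma> 1 jj) + Phi N j y (rearr \<eta> \<sigma> (N - jj + 1) N) - 2 * Phi N j y \<eta>)
     = delta k jj * (W psi jj 0 g + W psi jj (N-jj) g)" if jj: "jj \<in> {2..k-1}" for jj
  proof -
    have j1: "1 \<le> jj" and jN: "jj \<le> N" using jj kN by auto
    have w1: "(1 / fact jj) * (\<Sum>\<sigma>\<in>{\<sigma>. \<sigma> permutes {1..jj}}. Phi N j y (rearr \<eta> \<sigma> 1 jj) - Phi N j y \<eta>) = W psi jj 0 g"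
      using window_avg[OF j1, where p=0 and N=N and \<eta>=\<eta> and j=j and y=y] jN unfolding psi_def g_def by simp
    have w2: "(1 / fact jj) * (\<Sum>\<sigma>\<in>{\<sigma>. \<sigma> permutes {1..jj}}. Phi N j y (rearr \<eta> \<sigma> (N - jj + 1) N) - Phi N j y \<eta>) = W psi jj (N-jj) g"
      using window_avg[OF j1, where p="N-jj" and N=N and \<eta>=\<eta> and j=j and y=y] jN unfolding psi_def g_def by simp
    have "(\<Sum>\<sigma>\<in>{\<sigma>. \<sigma> permutes {1..jj}}.
            Phi N j y (rearr \<eta> \<sigma> 1 jj) + Phi N j y (rearr \<eta> \<sigma> (N - jj + 1) N) - 2 * Phi N j y \<eta>)
       = (\<Sum>\<sigma>\<in>{\<sigma>. \<sigma> permutes {1..jj}}. Phi N j y (rearr \<eta> \<sigma> 1 jj) - Phi N j y \<eta>)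
         + (\<Sum>\<sigma>\<in>{\<sigma>. \<sigma> permutes {1..jj}}. Phi N j y (rearr \<eta> \<sigma> (N - jj + 1) N) - Phi N j y \<eta>)"
      by (simp add: sum.distrib[symmetric] algebra_simps)
    then show ?thesis using w1 w2 by (simp add: field_simps)
  qed
  show ?thesis unfolding gen_Lt_def L using B by simp
qed



definition Qf :: "(real \<Rightarrow> real) \<Rightarrow> nat \<Rightarrow> nat \<Rightarrow> real" where
  "Qf psi k x = (\<Sum>s=1..k-1. real s / real k * psi (real x - real k + real s))"

definition LF :: "(real \<Rightarrow> real) \<Rightarrow> nat \<Rightarrow> (nat \<Rightarrow> real) \<Rightarrow> real" where
  "LF psi k G = (\<Sum>x=1..k-1. G x * Qf psi k x) - (\<Sum>s=1..k-1. \<Sum>x=1..s-1. psi (real x) * G x)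
     - (\<Sum>jj=2..k-1. delta k jj * W psi jj 0 G)"

lemma sin_cubic: fixes t :: real shows "\<bar>sin t - t\<bar> \<le> \<bar>t\<bar>^3 / 6"
  using Maclaurin_sin_bound[of t 3] by (simp add: sin_coeff_def numeral_3_eq_3 lessThan_Suc)

lemma Qf_lin: "Qf (\<lambda>t. a t + c * b t) k x = Qf a k x + c * Qf b k x"
  unfolding Qf_def sum_distrib_left sum.distrib[symmetric] by (rule sum.cong[OF refl]) (simp add: algebra_simps)

lemma W_lin: "W (\<lambda>t. a t + c * b t) n p G = W a n p G + c * W b n p G"
  unfolding W_def sum_distrib_left sum.distrib[symmetric] by (rule sum.cong[OF refl]) (simp add: algebra_simps)

lemma LF_lin: "LF (\<lambda>t. a t + c * b t) k G = LF a k G + c * LF b k G"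
proof -
  have 1: "(\<Sum>x=1..k-1. G x * Qf (\<lambda>t. a t + c * b t) k x) = (\<Sum>x=1..k-1. G x * Qf a k x) + c * (\<Sum>x=1..k-1. G x * Qf b k x)"
    unfolding Qf_lin sum_distrib_left sum.distrib[symmetric] by (rule sum.cong[OF refl]) (simp add: algebra_simps)
  have 2: "(\<Sum>s=1..k-1. \<Sum>x=1..s-1. (a (real x) + c * b (real x)) * G x) = (\<Sum>s=1..k-1. \<Sum>x=1..s-1. a (real x) * G x) + c * (\<Sum>s=1..k-1. \<Sum>x=1..s-1. b (real x) * G x)"
    unfolding sum_distrib_left sum.distrib[symmetric] by (intro sum.cong refl) (simp add: algebra_simps)
  have 3: "(\<Sum>jj=2..k-1. delta k jj * W (\<lambda>t. a t + c * b t) jj 0 G) = (\<Sum>jj=2..k-1. delta k jj * W a jj 0 G) + c * (\<Sum>jj=2..k-1. delta k jj * W b jj 0 G)"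
    unfolding W_lin sum_distrib_left sum.distrib[symmetric] by (rule sum.cong[OF refl]) (simp add: algebra_simps)
  show ?thesis unfolding LF_def 1 2 3 by (simp add: algebra_simps)
qed

lemma tri_swap:
  fixes f :: "nat \<Rightarrow> nat \<Rightarrow> real"
  shows "(\<Sum>s=1..n. \<Sum>x=1..s-1. f s x) = (\<Sum>x=1..n. \<Sum>s=x+1..n. f s x)"
proof (induction n)
  case 0 then show ?case by simp
next
  case (Suc n)
  have "(\<Sum>x=1..Suc n. \<Sum>s=x+1..Suc n. f s x) = (\<Sum>x=1..n. \<Sum>s=x+1..Suc n. f s x)"
    by simp
  also have "\<dots> = (\<Sum>x=1..n. (\<Sum>s=x+1..n. f s x) + f (Suc n) x)"
    by (rule sum.cong[OF refl]) simp
  also have "\<dots> = (\<Sum>s=1..n. \<Sum>x=1..s-1. f s x) + (\<Sum>x=1..n. f (Suc n) x)"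
    by (subst sum.distrib) (simp only: Suc.IH)
  finally have R: "(\<Sum>x=1..Suc n. \<Sum>s=x+1..Suc n. f s x) = (\<Sum>s=1..n. \<Sum>x=1..s-1. f s x) + (\<Sum>x=1..n. f (Suc n) x)" .
  have L: "(\<Sum>s=1..Suc n. \<Sum>x=1..s-1. f s x) = (\<Sum>s=1..n. \<Sum>x=1..s-1. f s x) + (\<Sum>x=1..n. f (Suc n) x)"
    by simp
  show ?case using L R by linarith
qed

lemma sum_lin: "(\<Sum>s=1..n. real s) = real n * (real n + 1) / 2"
  by (induction n) (simp_all add: field_simps)

lemma sum_sq: "(\<Sum>s=1..n. real s * real s) = real n * (real n + 1) * (2 * real n + 1) / 6"
  by (induction n) (simp_all add: field_simps)

lemma tele:
  fixes f :: "nat \<Rightarrow> real"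
  assumes "a \<le> Suc b"
  shows "(\<Sum>t=a..b. f t - f (Suc t)) = f a - f (Suc b)"
  using assms
proof (induction b)
  case 0 then show ?case by (cases a) auto
next
  case (Suc b)
  show ?case
  proof (cases "a = Suc (Suc b)")
    case True then show ?thesis by simp
  next
    case False
    then have "a \<le> Suc b" using Suc.prems by simp
    then show ?thesis using Suc.IH by simp
  qed
qed

lemma delta_split_real:
  fixes J K :: real
  assumes "1 \<le> J"
  shows "(K^2 + 3*J^2 - 1)/((2*J+1)*(2*J-1)) = 3/4 + (K^2 - 1/4)/2 * (1/(2*J-1) - 1/(2*(J+1)-1))"
proof -
  have a: "2*J-1 \<noteq> 0" "2*J+1 \<noteq> 0" using assms by auto
  define P where "P = (2*J+1)*(2*J-1)"
  have P: "P \<noteq> 0" using a unfolding P_def by simp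
  have e1: "2*(J+1)-1 = 2*J+1" by simp
  have e2: "1/(2*J-1) - 1/(2*J+1) = 2/P" using a unfolding P_def by (simp add: field_simps)
  have e3: "K^2 + 3*J^2 - 1 = 3/4*P + (K^2 - 1/4)" unfolding P_def by (simp add: algebra_simps power2_eq_square)
  have "(K^2 + 3*J^2 - 1)/P = 3/4 + (K^2 - 1/4)/2 * (2/P)"
    unfolding e3 using P by (simp add: field_simps)
  then show ?thesis unfolding e1 e2 P_def .
qed

lemma delta_split: "1 \<le> jj \<Longrightarrow> delta k jj = 3/4 + (real k ^ 2 - 1/4) / 2 * (1 / (2 * real jj - 1) - 1 / (2 * real (Suc jj) - 1))"
  unfolding delta_def using delta_split_real[of "real jj" "real k"] by simp

lemma D_closed:
  assumes "1 \<le> x" "x \<le> k - 1"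
  shows "(\<Sum>jj=x+1..k-1. delta k jj) = 3 * (real k - 1 - real x) / 4
     + (real k ^ 2 - 1/4) / 2 * (1 / (2 * real x + 1) - 1 / (2 * real k - 1))"
proof -
  let ?f = "\<lambda>t::nat. 1 / (2 * real t - 1)"
  have "(\<Sum>jj=x+1..k-1. delta k jj) = (\<Sum>jj=x+1..k-1. 3/4 + (real k ^ 2 - 1/4) / 2 * (?f jj - ?f (Suc jj)))"
    by (rule sum.cong[OF refl]) (simp add: delta_split)
  also have "\<dots> = real (k - 1 - x) * (3/4) + (real k ^ 2 - 1/4) / 2 * (\<Sum>jj=x+1..k-1. ?f jj - ?f (Suc jj))"
    by (simp add: sum.distrib sum_distrib_left)
  also have "(\<Sum>jj=x+1..k-1. ?f jj - ?f (Suc jj)) = ?f (x+1) - ?f (Suc (k-1))"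
    by (rule tele) (use assms in simp)
  finally show ?thesis using assms by (simp add: of_nat_diff field_simps)
qed



lemma ex_real0:
  fixes K X :: real
  assumes "X \<ge> 1"
  shows "(X-K)*(K-1)/2 + (K-1)*(2*K-1)/6 - (K-1-X)*X
   - (K^2+3*X^2-1)*(X-1)/(6*(2*X+1))
   + X*(3*(K-1-X)/4 + (4*K^2-1)/(8*(2*X+1)) - (2*K+1)/8) = 0"
proof -
  have nz: "2*X+1 \<noteq> 0" using assms by auto
  show ?thesis using nz by (simp add: field_simps) (simp add: algebra_simps power2_eq_square power3_eq_cube)
qed

lemma ex_zero:
  assumes x1: "1 \<le> x" and xk: "x \<le> k - 1"
  shows "Qf (\<lambda>t. t) k x - real (k-1-x) * real x - delta k x * (\<Sum>s=1..x-1. real s * real s / real x)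
    + real x * (\<Sum>jj=x+1..k-1. delta k jj) = 0"
proof -
  define K where "K = real k"
  define X where "X = real x"
  have k2: "2 \<le> k" using x1 xk by simp
  have K2: "K \<ge> 2" using k2 unfolding K_def by simp
  have X1: "X \<ge> 1" using x1 unfolding X_def by simp
  have rk1: "real (k - 1) = K - 1" using k2 unfolding K_def by (simp add: of_nat_diff)
  have rx1: "real (x - 1) = X - 1" using x1 unfolding X_def by (simp add: of_nat_diff)
  have rkx: "real (k - 1 - x) = K - 1 - X" using xk k2 unfolding K_def X_def by (simp add: of_nat_diff)
  have "Qf (\<lambda>t. t) k x = (\<Sum>s=1..k-1. (X - K) / K * real s + 1 / K * (real s * real s))"
    unfolding Qf_def K_def X_def by (rule sum.cong[OF refl]) (simp add: add_divide_distrib diff_divide_distrib algebra_simps)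
  also have "\<dots> = (X - K) / K * (\<Sum>s=1..k-1. real s) + 1 / K * (\<Sum>s=1..k-1. real s * real s)"
    by (simp add: sum.distrib sum_distrib_left)
  also have "\<dots> = (X-K)*(K-1)/2 + (K-1)*(2*K-1)/6"
    unfolding sum_lin sum_sq rk1 using K2 by (simp add: field_simps)
  finally have Q: "Qf (\<lambda>t. t) k x = (X-K)*(K-1)/2 + (K-1)*(2*K-1)/6" .
  have "(\<Sum>s=1..x-1. real s * real s / real x) = (\<Sum>s=1..x-1. real s * real s) / X"
    unfolding X_def by (simp add: sum_divide_distrib)
  also have "\<dots> = (X - 1) * (2 * X - 1) / 6"
    unfolding sum_sq rx1 using X1 by (simp add: field_simps)
  finally have A: "(\<Sum>s=1..x-1. real s * real s / real x) = (X - 1) * (2 * X - 1) / 6" .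
  have dA: "delta k x * ((X - 1) * (2 * X - 1) / 6) = (K^2+3*X^2-1)*(X-1)/(6*(2*X+1))"
  proof -
    have "2*X - 1 \<noteq> 0" "2*X+1 \<noteq> 0" using X1 by auto
    moreover have "n/(c*b) * (a*b/6) = n*a/(6*c)" if "b \<noteq> 0" "c \<noteq> 0" for n a b c :: real
      using that by (simp add: field_simps)
    ultimately show ?thesis unfolding delta_def K_def[symmetric] X_def[symmetric] by simp
  qed
  have D: "(\<Sum>jj=x+1..k-1. delta k jj) = 3*(K-1-X)/4 + (4*K^2-1)/(8*(2*X+1)) - (2*K+1)/8"
  proof -
    have "2*K - 1 \<noteq> 0" "2*X+1 \<noteq> 0" using X1 K2 by auto
    have sq: "K^2-1/4 = (2*K-1)*(2*K+1)/4" by (simp add: algebra_simps power2_eq_square)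
    have d1: "(K^2-1/4)/2 * (1/(2*K-1)) = (2*K+1)/8" unfolding sq using \<open>2*K - 1 \<noteq> 0\<close> by (simp add: field_simps)
    have d2: "(K^2-1/4)/2 * (1/(2*X+1)) = (4*K^2-1)/(8*(2*X+1))" using \<open>2*X+1 \<noteq> 0\<close> by (simp add: field_simps)
    have "(K^2 - 1/4) / 2 * (1 / (2*X + 1) - 1 / (2*K - 1)) = (4*K^2-1)/(8*(2*X+1)) - (2*K+1)/8"
      unfolding right_diff_distrib d1 d2 ..
    then show ?thesis using D_closed[OF x1 xk] unfolding K_def X_def by simp
  qed
  have dA': "delta k x * (\<Sum>s=1..x-1. real s * real s / real x) = (K^2+3*X^2-1)*(X-1)/(6*(2*X+1))"
    unfolding A using dA .
  show ?thesis unfolding Q dA' D rkx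
    using ex_real0[OF X1, of K] unfolding X_def by simp
qed



lemma sum_from2:
  fixes F :: "nat \<Rightarrow> real"
  assumes "F 1 = 0"
  shows "(\<Sum>j=2..m. F j) = (\<Sum>j=1..m. F j)"
proof (cases "m = 0")
  case True then show ?thesis by simp
next
  case False
  then have "(\<Sum>j=1..m. F j) = F 1 + (\<Sum>j=Suc 1..m. F j)" by (intro sum.atLeast_Suc_atMost) simp
  then show ?thesis using assms by (simp add: numeral_2_eq_2)
qed

lemma W_id0:
  assumes "G 0 = 0"
  shows "W (\<lambda>t. t) jj 0 G = G jj * (\<Sum>s=1..jj-1. real s * real s / real jj) - (\<Sum>s=1..jj-1. real s * G s)"
  unfolding W_def sum_distrib_left sum_subtractf[symmetric] using assms
  by (intro sum.cong refl) (simp add: algebra_simps)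

lemma LF_id:
  assumes G0: "G 0 = 0"
  shows "LF (\<lambda>t. t) k G = 0"
proof -
  let ?A = "\<lambda>jj. (\<Sum>s=1..jj-1. real s * real s / real jj)"
  let ?D = "\<lambda>x. (\<Sum>jj=x+1..k-1. delta k jj)"
  have T2: "(\<Sum>s=1..k-1. \<Sum>x=1..s-1. real x * G x) = (\<Sum>x=1..k-1. real (k-1-x) * real x * G x)"
    unfolding tri_swap by (rule sum.cong[OF refl]) simp
  have "(\<Sum>jj=2..k-1. delta k jj * W (\<lambda>t. t) jj 0 G)
      = (\<Sum>jj=1..k-1. delta k jj * (G jj * ?A jj - (\<Sum>s=1..jj-1. real s * G s)))"
    unfolding W_id0[where G=G, OF G0] by (rule sum_from2) simp
  also have "\<dots> = (\<Sum>jj=1..k-1. delta k jj * G jj * ?A jj) - (\<Sum>jj=1..k-1. \<Sum>s=1..jj-1. delta k jj * (real s * G s))"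
    by (simp add: sum_subtractf sum_distrib_left algebra_simps)
  also have "(\<Sum>jj=1..k-1. \<Sum>s=1..jj-1. delta k jj * (real s * G s)) = (\<Sum>x=1..k-1. \<Sum>jj=x+1..k-1. delta k jj * (real x * G x))"
    by (rule tri_swap)
  also have "\<dots> = (\<Sum>x=1..k-1. real x * G x * ?D x)"
    by (simp add: sum_distrib_left sum_distrib_right algebra_simps)
  finally have T3: "(\<Sum>jj=2..k-1. delta k jj * W (\<lambda>t. t) jj 0 G)
      = (\<Sum>jj=1..k-1. delta k jj * G jj * ?A jj) - (\<Sum>x=1..k-1. real x * G x * ?D x)" .
  have "LF (\<lambda>t. t) k G = (\<Sum>x=1..k-1. G x * (Qf (\<lambda>t. t) k x - real (k-1-x) * real x - delta k x * ?A x + real x * ?D x))"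
    unfolding LF_def T2 T3 by (simp add: sum_subtractf sum.distrib algebra_simps)
  also have "\<dots> = 0"
    by (rule sum.neutral) (use ex_zero in auto)
  finally show ?thesis .
qed



lemma sum_bound:
  fixes f :: "'a \<Rightarrow> real"
  assumes "finite A" "card A \<le> k" "0 \<le> M" "\<And>i. i \<in> A \<Longrightarrow> \<bar>f i\<bar> \<le> M"
  shows "\<bar>sum f A\<bar> \<le> real k * M"
proof -
  have "\<bar>sum f A\<bar> \<le> (\<Sum>i\<in>A. \<bar>f i\<bar>)" by (rule sum_abs)
  also have "\<dots> \<le> real (card A) * M" using sum_bounded_above[of A "\<lambda>i. \<bar>f i\<bar>" M] assms(4) by simp
  also have "\<dots> \<le> real k * M" using assms(2,3) by (intro mult_right_mono) auto
  finally show ?thesis .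
qed

lemma delta_bounds:
  assumes "2 \<le> jj" "jj \<le> k"
  shows "0 \<le> delta k jj" "delta k jj * real jj ^ 2 \<le> 2 * real k ^ 2"
proof -
  define J where "J = real jj"
  define K where "K = real k"
  have J: "J \<ge> 2" "J \<le> K" using assms unfolding J_def K_def by auto
  have den: "(2*J+1)*(2*J-1) > 0" using J by simp
  have j1: "1 \<le> J*J" using J mult_mono[of 1 J 1 J] by simp
  have kk: "0 \<le> K*K" by simp
  have num: "K^2 + 3*J^2 - 1 \<ge> 0" unfolding power2_eq_square using j1 kk by linarith
  show "0 \<le> delta k jj" unfolding delta_def J_def[symmetric] K_def[symmetric] using den num by simp
  have JJ: "J^2 \<le> K^2" using J by (intro power_mono) auto
  have a1: "J^2 * J^2 \<le> K^2 * J^2" using JJ by (intro mult_right_mono) auto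
  have j1': "1 \<le> J^2" using j1 by (simp add: power2_eq_square)
  have a2: "K^2 \<le> K^2 * J^2" using mult_left_mono[OF j1', of "K^2"] by simp
  have e1: "(K^2 + 3*J^2 - 1) * J^2 = K^2*J^2 + 3*(J^2*J^2) - J^2" by (simp add: algebra_simps)
  have e2: "2*K^2*((2*J+1)*(2*J-1)) = 8*(K^2*J^2) - 2*K^2" by (simp add: algebra_simps power2_eq_square)
  have j2: "0 \<le> J^2" by simp
  have jj2: "J*J = J^2" by (simp add: power2_eq_square)
  have main: "(K^2 + 3*J^2 - 1) * J^2 \<le> 2*K^2*((2*J+1)*(2*J-1))"
    unfolding e1 e2 using a1 a2 j2 zero_le_power2[of K] unfolding jj2 by linarith
  have "(K^2 + 3*J^2 - 1) / ((2*J+1)*(2*J-1)) * J^2 = ((K^2 + 3*J^2 - 1) * J^2) / ((2*J+1)*(2*J-1))" by simp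
  also have "\<dots> \<le> 2 * K^2" using main den by (simp add: pos_divide_le_eq)
  finally have "(K^2 + 3*J^2 - 1) / ((2*J+1)*(2*J-1)) * J^2 \<le> 2 * K^2" .
  then show "delta k jj * real jj ^ 2 \<le> 2 * real k ^ 2" unfolding delta_def J_def[symmetric] K_def[symmetric] .
qed

lemma e_bound:
  fixes t th :: real
  assumes "\<bar>t\<bar> \<le> real m"
  shows "\<bar>sin (t*th) - t*th\<bar> \<le> real m ^ 3 * (\<bar>th\<bar>^3 / 6)"
proof -
  have "\<bar>sin (t*th) - t*th\<bar> \<le> \<bar>t*th\<bar>^3 / 6" by (rule sin_cubic)
  also have "\<dots> = \<bar>t\<bar>^3 * (\<bar>th\<bar>^3 / 6)" by (simp add: abs_mult power_mult_distrib)
  also have "\<dots> \<le> real m ^ 3 * (\<bar>th\<bar>^3 / 6)" using assms by (intro mult_right_mono power_mono) auto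
  finally show ?thesis .
qed

lemma abs2: fixes a b c :: real shows "\<bar>a\<bar> \<le> c \<Longrightarrow> \<bar>b\<bar> \<le> c \<Longrightarrow> \<bar>a - b\<bar> \<le> 2 * c"
  by arith

lemma LF_bound:
  fixes G :: "nat \<Rightarrow> real" and th :: real
  assumes G0: "G 0 = 0" and Gb: "\<And>x. x \<le> k \<Longrightarrow> \<bar>G x\<bar> \<le> real x"
  shows "\<bar>LF (\<lambda>t. sin (t * th)) k G\<bar> \<le> real k ^ 6 * \<bar>th\<bar> ^ 3"
proof -
  define B where "B = \<bar>th\<bar>^3/6"
  have B0: "0 \<le> B" unfolding B_def by simp
  define e where "e = (\<lambda>t::real. sin (t*th) - t*th)"
  have fe: "(\<lambda>t. sin(t*th)) = (\<lambda>t. e t + th * t)" by (auto simp: e_def)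
  have LFe: "LF (\<lambda>t. sin(t*th)) k G = LF e k G"
    unfolding fe using LF_lin[of e th "\<lambda>t. t" k G] LF_id[where G=G and k=k, OF G0] by simp
  have eb: "\<bar>e t\<bar> \<le> real m^3 * B" if "\<bar>t\<bar> \<le> real m" for t m
    using e_bound[OF that, of th] unfolding e_def B_def .
  define K where "K = real k"
  have K0: "0 \<le> K" unfolding K_def by simp
  have cardk: "card {1..k-1} \<le> k" by simp
  have Qb: "\<bar>Qf e k x\<bar> \<le> K * (K^3 * B)" if x: "x \<in> {1..k-1}" for x
    unfolding Qf_def K_def
  proof (rule sum_bound)
    fix s assume s: "s \<in> {1..k-1}"
    have a: "\<bar>real x - real k + real s\<bar> \<le> real k" using x s by auto
    have b: "\<bar>real s / real k\<bar> \<le> 1" using s by auto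
    have "\<bar>real s / real k * e (real x - real k + real s)\<bar> = \<bar>real s / real k\<bar> * \<bar>e (real x - real k + real s)\<bar>"
      by (simp add: abs_mult)
    also have "\<dots> \<le> 1 * (real k ^ 3 * B)" using b eb[OF a] by (intro mult_mono) auto
    finally show "\<bar>real s / real k * e (real x - real k + real s)\<bar> \<le> real k ^ 3 * B" by simp
  qed (use B0 in auto)
  have T1: "\<bar>\<Sum>x=1..k-1. G x * Qf e k x\<bar> \<le> K * (K * (K * (K^3 * B)))"
    unfolding K_def
  proof (rule sum_bound)
    fix x assume x: "x \<in> {1..k-1}"
    have "\<bar>G x * Qf e k x\<bar> = \<bar>G x\<bar> * \<bar>Qf e k x\<bar>" by (simp add: abs_mult)
    also have "\<dots> \<le> real k * (real k * (real k^3 * B))"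
    proof -
      have xk: "x \<le> k" using x by auto
      have "\<bar>G x\<bar> \<le> real k" using Gb[OF xk] of_nat_le_iff[of x k] xk by linarith
      then show ?thesis using Qb[OF x] unfolding K_def by (intro mult_mono) auto
    qed
    finally show "\<bar>G x * Qf e k x\<bar> \<le> real k * (real k * (real k^3 * B))" .
  qed (use B0 in auto)
  have T2: "\<bar>\<Sum>s=1..k-1. \<Sum>x=1..s-1. e (real x) * G x\<bar> \<le> K * (K * (K^3 * B * K))"
    unfolding K_def
  proof (rule sum_bound)
    fix s assume s: "s \<in> {1..k-1}"
    show "\<bar>\<Sum>x=1..s-1. e (real x) * G x\<bar> \<le> real k * (real k^3 * B * real k)"
    proof (rule sum_bound)
      fix x assume x: "x \<in> {1..s-1}"
      have xk: "x \<le> k" using x s by auto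
      have "\<bar>e (real x) * G x\<bar> = \<bar>e (real x)\<bar> * \<bar>G x\<bar>" by (simp add: abs_mult)
      also have "\<dots> \<le> (real k^3 * B) * real k"
        using eb[of "real x" k] Gb[OF xk] xk B0 by (intro mult_mono) auto
      finally show "\<bar>e (real x) * G x\<bar> \<le> real k^3 * B * real k" .
    qed (use s B0 in auto)
  qed (use B0 in auto)
  have Wb: "\<bar>W e jj 0 G\<bar> \<le> real jj * (real jj ^ 3 * B * (2 * real jj))" if jj: "jj \<in> {2..k-1}" for jj
    unfolding W_def
  proof (rule sum_bound)
    fix s assume s: "s \<in> {1..jj-1}"
    have sj: "s \<le> jj" and jk: "jj \<le> k" using s jj by auto
    have c: "\<bar>(1 - real s / real jj) * G 0 + real s / real jj * G (0 + jj) - G (0 + s)\<bar> \<le> 2 * real jj"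
    proof -
      have "\<bar>real s / real jj * G jj\<bar> \<le> 1 * real jj"
      proof -
        have "real s / real jj \<le> 1" using sj jj by (simp add: divide_le_eq_1)
        then show ?thesis unfolding abs_mult using Gb[OF jk] by (intro mult_mono) auto
      qed
      then have fa: "\<bar>real s / real jj * G jj\<bar> \<le> real jj" by simp
      have fb: "\<bar>G s\<bar> \<le> real jj" using Gb[of s] sj jk by auto
      have eq: "(1 - real s / real jj) * G 0 + real s / real jj * G (0 + jj) - G (0 + s) = real s / real jj * G jj - G s"
        using G0 by simp
      show ?thesis unfolding eq by (rule abs2[OF fa fb])
    qed
    have "\<bar>e (real (0 + s)) * ((1 - real s / real jj) * G 0 + real s / real jj * G (0 + jj) - G (0 + s))\<bar>
       = \<bar>e (real s)\<bar> * \<bar>(1 - real s / real jj) * G 0 + real s / real jj * G (0 + jj) - G (0 + s)\<bar>"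
      by (simp add: abs_mult)
    also have "\<dots> \<le> (real jj ^ 3 * B) * (2 * real jj)"
      using eb[of "real s" jj] sj c B0 by (intro mult_mono) auto
    finally show "\<bar>e (real (0 + s)) * ((1 - real s / real jj) * G 0 + real s / real jj * G (0 + jj) - G (0 + s))\<bar>
       \<le> real jj ^ 3 * B * (2 * real jj)" .
  qed (use B0 in auto)
  have T3: "\<bar>\<Sum>jj=2..k-1. delta k jj * W e jj 0 G\<bar> \<le> K * (4 * K^5 * B)"
    unfolding K_def
  proof (rule sum_bound)
    fix jj assume jj: "jj \<in> {2..k-1}"
    have j2: "2 \<le> jj" and jk: "jj \<le> k" using jj by auto
    note db = delta_bounds[OF j2 jk]
    define J where "J = real jj"
    have J0: "0 \<le> J" unfolding J_def by simp
    have JK: "J \<le> real k" unfolding J_def using jk by simp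
    have "\<bar>delta k jj * W e jj 0 G\<bar> = delta k jj * \<bar>W e jj 0 G\<bar>" using db(1) by (simp add: abs_mult)
    also have "\<dots> \<le> delta k jj * (J * (J ^ 3 * B * (2 * J)))"
      using Wb[OF jj] db(1) unfolding J_def by (intro mult_left_mono) auto
    also have "\<dots> = 2 * B * (delta k jj * J^2) * J^3" by (simp add: algebra_simps power2_eq_square power3_eq_cube)
    also have "\<dots> \<le> 2 * B * (2 * real k ^ 2) * real k ^ 3"
    proof -
      have p3: "J^3 \<le> real k ^ 3" using JK J0 by (intro power_mono) auto
      have m1: "(delta k jj * J^2) * J^3 \<le> (2 * real k ^ 2) * real k ^ 3"
        by (rule mult_mono) (use db(2) p3 J0 in \<open>auto simp: J_def\<close>)
      have "2 * B * ((delta k jj * J^2) * J^3) \<le> 2 * B * ((2 * real k ^ 2) * real k ^ 3)"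
        using m1 B0 by (intro mult_left_mono) auto
      then show ?thesis by (simp add: mult.assoc)
    qed
    also have "\<dots> = 4 * real k ^ 5 * B" by (simp add: algebra_simps power2_eq_square power3_eq_cube eval_nat_numeral)
    finally show "\<bar>delta k jj * W e jj 0 G\<bar> \<le> 4 * real k ^ 5 * B" .
  qed (use B0 in auto)
  have "\<bar>LF e k G\<bar> \<le> K * (K * (K * (K^3 * B))) + K * (K * (K^3 * B * K)) + K * (4 * K^5 * B)"
    unfolding LF_def using T1 T2 T3 by linarith
  also have "\<dots> = K^6 * \<bar>th\<bar>^3" unfolding B_def by (simp add: algebra_simps eval_nat_numeral)
  finally show ?thesis unfolding LFe K_def .
qed



definition Pf :: "(real \<Rightarrow> real) \<Rightarrow> nat \<Rightarrow> nat \<Rightarrow> real" where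
  "Pf psi k x = (\<Sum>s=1..k-1. (1 - real s / real k) * psi (real x + real s))"

definition lamb :: "nat \<Rightarrow> real \<Rightarrow> real" where
  "lamb k th = real k - 1 - 2 * (\<Sum>i=1..k. (real k - real i) / real k * cos (real i * th))"

lemma sum_rev1:
  fixes f :: "nat \<Rightarrow> real"
  shows "(\<Sum>s=1..n. f s) = (\<Sum>s=1..n. f (n + 1 - s))"
  using sum.atLeastAtMost_rev[of f 1 n] by (simp add: add.commute)

lemma Qf_rev:
  assumes "1 \<le> k"
  shows "Qf psi k x = (\<Sum>s=1..k-1. (1 - real s / real k) * psi (real x - real s))"
proof -
  have "Qf psi k x = (\<Sum>s=1..k-1. real (k-1+1-s) / real k * psi (real x - real k + real (k-1+1-s)))"
    unfolding Qf_def by (rule sum_rev1)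
  also have "\<dots> = (\<Sum>s=1..k-1. (1 - real s / real k) * psi (real x - real s))"
  proof (rule sum.cong[OF refl])
    fix s assume s: "s \<in> {1..k-1}"
    then have e: "k - 1 + 1 - s = k - s" using assms by simp
    have sk: "s \<le> k" using s by auto
    have r: "real (k - s) = real k - real s" using sk by (simp add: of_nat_diff)
    show "real (k-1+1-s) / real k * psi (real x - real k + real (k-1+1-s)) = (1 - real s / real k) * psi (real x - real s)"
      unfolding e r using assms by (simp add: field_simps)
  qed
  finally show ?thesis .
qed

lemma trig_PQ:
  assumes k: "1 \<le> k"
  shows "Pf (\<lambda>t. sin (t*th)) k x + Qf (\<lambda>t. sin (t*th)) k x = (real k - 1 - lamb k th) * sin (real x * th)"
proof -
  have "Pf (\<lambda>t. sin (t*th)) k x + Qf (\<lambda>t. sin (t*th)) k x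
      = (\<Sum>s=1..k-1. (1 - real s / real k) * (sin ((real x + real s)*th) + sin ((real x - real s)*th)))"
    unfolding Pf_def Qf_rev[OF k] sum.distrib[symmetric] by (rule sum.cong[OF refl]) (simp add: algebra_simps)
  also have "\<dots> = (\<Sum>s=1..k-1. (1 - real s / real k) * (2 * sin (real x * th) * cos (real s * th)))"
    by (rule sum.cong[OF refl]) (simp add: algebra_simps sin_add sin_diff)
  also have "\<dots> = 2 * (\<Sum>i=1..k-1. (real k - real i) / real k * cos (real i * th)) * sin (real x * th)"
    unfolding sum_distrib_left sum_distrib_right using k
    by (intro sum.cong refl) (simp add: field_simps)
  also have "(\<Sum>i=1..k-1. (real k - real i) / real k * cos (real i * th)) = (\<Sum>i=1..k. (real k - real i) / real k * cos (real i * th))"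
  proof -
    have "{1..k} = insert k {1..k-1}" using k by auto
    moreover have "k \<notin> {1..k-1}" using k by auto
    ultimately show ?thesis by simp
  qed
  finally show ?thesis unfolding lamb_def by simp
qed

lemma refl_sum:
  fixes f :: "nat \<Rightarrow> real"
  assumes "a \<le> N" "b \<le> N"
  shows "(\<Sum>x=N-b..N-a. f x) = (\<Sum>u=a..b. f (N - u))"
  by (rule sum.reindex_bij_witness[where i="\<lambda>u. N - u" and j="\<lambda>x. N - x"]) (use assms in auto)

lemma psi_refl:
  assumes "sin (real N * th) = 0"
  shows "sin ((real N - r) * th) = - cos (real N * th) * sin (r * th)"
  using assms by (simp add: left_diff_distrib sin_diff)

lemma sum_split_cl:
  fixes f :: "nat \<Rightarrow> real"
  assumes "a \<le> b + 1" "b \<le> c"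
  shows "(\<Sum>x=a..c. f x) = (\<Sum>x=a..b. f x) + (\<Sum>x=b+1..c. f x)"
proof -
  have "{a..c} = {a..b} \<union> {b+1..c}" using assms by auto
  moreover have "{a..b} \<inter> {b+1..c} = {}" by auto
  ultimately show ?thesis by (simp add: sum.union_disjoint)
qed



lemma W_expand:
  "W psi k p g = g p * Pf psi k p + g (p+k) * Qf psi k (p+k) - (\<Sum>s=1..k-1. psi (real (p+s)) * g (p+s))"
  unfolding W_def Pf_def Qf_def sum_distrib_left sum.distrib[symmetric] sum_subtractf[symmetric]
  by (rule sum.cong[OF refl]) (simp add: algebra_simps)

lemma bulk:
  fixes g :: "nat \<Rightarrow> real"
  assumes g0: "g 0 = 0" and gN: "g N = 0" and k: "1 \<le> k" and kN: "k \<le> N"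
  shows "(\<Sum>p=0..N-k. W psi k p g) = (\<Sum>x=1..N-k. g x * Pf psi k x) + (\<Sum>x=k..N-1. g x * Qf psi k x)
     - (\<Sum>s=1..k-1. \<Sum>x=s..N-k+s. psi (real x) * g x)"
proof -
  have "(\<Sum>p=0..N-k. W psi k p g) = (\<Sum>p=0..N-k. g p * Pf psi k p) + (\<Sum>p=0..N-k. g (p+k) * Qf psi k (p+k))
      - (\<Sum>p=0..N-k. \<Sum>s=1..k-1. psi (real (p+s)) * g (p+s))"
    unfolding W_expand by (simp add: sum.distrib sum_subtractf)
  also have "(\<Sum>p=0..N-k. g p * Pf psi k p) = (\<Sum>x=1..N-k. g x * Pf psi k x)"
    using sum.atLeast_Suc_atMost[of 0 "N-k" "\<lambda>x. g x * Pf psi k x"] g0 by simp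
  also have "(\<Sum>p=0..N-k. g (p+k) * Qf psi k (p+k)) = (\<Sum>x=k..N. g x * Qf psi k x)"
    using sum.shift_bounds_cl_nat_ivl[of "\<lambda>x. g x * Qf psi k x" 0 k "N-k"] kN by simp
  also have "\<dots> = (\<Sum>x=k..N-1. g x * Qf psi k x)"
  proof -
    have "N = Suc (N-1)" using k kN by simp
    then have "(\<Sum>x=k..N. g x * Qf psi k x) = (\<Sum>x=k..Suc (N-1). g x * Qf psi k x)" by simp
    also have "\<dots> = (\<Sum>x=k..N-1. g x * Qf psi k x) + g N * Qf psi k N"
      using k kN \<open>N = Suc (N-1)\<close> by (subst sum.cl_ivl_Suc) auto
    finally show ?thesis using gN by simp
  qed
  also have "(\<Sum>p=0..N-k. \<Sum>s=1..k-1. psi (real (p+s)) * g (p+s)) = (\<Sum>s=1..k-1. \<Sum>x=s..N-k+s. psi (real x) * g x)"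
  proof -
    have "(\<Sum>p=0..N-k. \<Sum>s=1..k-1. psi (real (p+s)) * g (p+s)) = (\<Sum>s=1..k-1. \<Sum>p=0..N-k. psi (real (p+s)) * g (p+s))"
      by (rule sum.swap)
    also have "\<dots> = (\<Sum>s=1..k-1. \<Sum>x=s..N-k+s. psi (real x) * g x)"
      by (rule sum.cong[OF refl]) (use sum.shift_bounds_cl_nat_ivl[of "\<lambda>x. psi (real x) * g x" 0 _ "N-k"] in simp)
    finally show ?thesis .
  qed
  finally show ?thesis .
qed

lemma W_refl:
  fixes g :: "nat \<Rightarrow> real"
  assumes sinN: "sin (real N * th) = 0" and gN: "g N = 0" and jN: "jj \<le> N"
  shows "W (\<lambda>t. sin (t*th)) jj (N-jj) g = - cos (real N * th) * W (\<lambda>t. sin (t*th)) jj 0 (\<lambda>u. g (N-u))"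
proof -
  let ?c = "- cos (real N * th)"
  have "W (\<lambda>t. sin (t*th)) jj (N-jj) g = (\<Sum>s=1..jj-1. sin (real (N-jj + (jj-1+1-s)) * th) *
      ((1 - real (jj-1+1-s) / real jj) * g (N-jj) + real (jj-1+1-s) / real jj * g (N-jj+jj) - g (N-jj + (jj-1+1-s))))"
    unfolding W_def by (rule sum_rev1)
  also have "\<dots> = (\<Sum>s=1..jj-1. ?c * (sin (real (0+s) * th) *
      ((1 - real s / real jj) * g (N-0) + real s / real jj * g (N-(0+jj)) - g (N-(0+s)))))"
  proof (rule sum.cong[OF refl])
    fix s assume s: "s \<in> {1..jj-1}"
    have e1: "jj-1+1-s = jj - s" using s by auto
    have e2: "N-jj + (jj-s) = N - s" using s jN by auto
    have e3: "N - jj + jj = N" using jN by simp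
    have sj: "s \<le> jj" using s by auto
    have sN: "s \<le> N" using sj jN by simp
    have r1: "real (N - s) = real N - real s" using sN by (simp add: of_nat_diff)
    have r2: "real (jj - s) = real jj - real s" using sj by (simp add: of_nat_diff)
    have jp: "real jj \<noteq> 0" using s by auto
    show "sin (real (N-jj + (jj-1+1-s)) * th) *
      ((1 - real (jj-1+1-s) / real jj) * g (N-jj) + real (jj-1+1-s) / real jj * g (N-jj+jj) - g (N-jj + (jj-1+1-s)))
      = ?c * (sin (real (0+s) * th) * ((1 - real s / real jj) * g (N-0) + real s / real jj * g (N-(0+jj)) - g (N-(0+s))))"
      unfolding e1 e2 e3 r1 r2 psi_refl[OF sinN] using gN jp by (simp add: field_simps)
  qed
  also have "\<dots> = ?c * W (\<lambda>t. sin (t*th)) jj 0 (\<lambda>u. g (N-u))"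
    unfolding W_def sum_distrib_left ..
  finally show ?thesis .
qed



lemma RF_eq:
  fixes g :: "nat \<Rightarrow> real"
  assumes sinN: "sin (real N * th) = 0" and gN: "g N = 0" and k: "1 \<le> k" and kN: "k \<le> N"
  shows "(\<Sum>x=N-k+1..N-1. g x * Pf (\<lambda>t. sin (t*th)) k x)
     - (\<Sum>s=1..k-1. \<Sum>x=N-k+s+1..N-1. sin (real x * th) * g x)
     - (\<Sum>jj=2..k-1. delta k jj * W (\<lambda>t. sin (t*th)) jj (N-jj) g)
     = (- cos (real N * th)) * LF (\<lambda>t. sin (t*th)) k (\<lambda>u. g (N-u))"
proof -
  let ?c = "- cos (real N * th)"
  let ?psi = "\<lambda>t. sin (t*th)"
  let ?G = "\<lambda>u. g (N-u)"
  have a1: "N - (k-1) = N-k+1" using k kN by simp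
  have "(\<Sum>x=N-k+1..N-1. g x * Pf ?psi k x) = (\<Sum>u=1..k-1. g (N-u) * Pf ?psi k (N-u))"
    using refl_sum[of 1 N "k-1" "\<lambda>x. g x * Pf ?psi k x"] k kN unfolding a1 by simp
  also have "\<dots> = ?c * (\<Sum>u=1..k-1. ?G u * Qf ?psi k u)"
    unfolding sum_distrib_left
  proof (rule sum.cong[OF refl])
    fix u assume u: "u \<in> {1..k-1}"
    have uN: "u \<le> N" using u kN by auto
    have "Pf ?psi k (N-u) = ?c * Qf ?psi k u"
      unfolding Pf_def Qf_rev[OF k] sum_distrib_left
    proof (rule sum.cong[OF refl])
      fix s assume s: "s \<in> {1..k-1}"
      have ee: "real (N-u) + real s = real N - (real u - real s)" using uN by (simp add: of_nat_diff)
      show "(1 - real s / real k) * sin ((real (N-u) + real s) * th) = ?c * ((1 - real s / real k) * sin ((real u - real s) * th))"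
        unfolding ee psi_refl[OF sinN, of "real u - real s"] by simp
    qed
    then show "g (N-u) * Pf ?psi k (N-u) = ?c * (?G u * Qf ?psi k u)" by simp
  qed
  finally have A: "(\<Sum>x=N-k+1..N-1. g x * Pf ?psi k x) = ?c * (\<Sum>u=1..k-1. ?G u * Qf ?psi k u)" .
  define H where "H m = (\<Sum>u=1..m. sin (real u * th) * ?G u)" for m
  have "(\<Sum>s=1..k-1. \<Sum>x=N-k+s+1..N-1. sin (real x * th) * g x) = (\<Sum>s=1..k-1. ?c * H (k-1-s))"
  proof (rule sum.cong[OF refl])
    fix s assume s: "s \<in> {1..k-1}"
    have a2: "N - (k-1-s) = N-k+s+1" using s k kN by auto
    have "(\<Sum>x=N-k+s+1..N-1. sin (real x * th) * g x) = (\<Sum>u=1..k-1-s. sin (real (N-u) * th) * g (N-u))"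
    proof -
      have R: "(\<Sum>x=N-(k-1-s)..N-1. sin (real x * th) * g x) = (\<Sum>u=1..k-1-s. sin (real (N-u) * th) * g (N-u))"
        by (rule refl_sum) (use s kN in auto)
      show ?thesis unfolding a2[symmetric] by (rule R)
    qed
    also have "\<dots> = ?c * H (k-1-s)"
      unfolding H_def sum_distrib_left
    proof (rule sum.cong[OF refl])
      fix u assume u: "u \<in> {1..k-1-s}"
      have uN: "u \<le> N" using u kN by auto
      have ee: "real (N-u) = real N - real u" using uN by (simp add: of_nat_diff)
      show "sin (real (N-u) * th) * g (N-u) = ?c * (sin (real u * th) * g (N-u))"
        unfolding ee psi_refl[OF sinN, of "real u"] by simp
    qed
    finally show "(\<Sum>x=N-k+s+1..N-1. sin (real x * th) * g x) = ?c * H (k-1-s)" .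
  qed
  also have "\<dots> = (\<Sum>s=1..k-1. ?c * H (k-1-(k-1+1-s)))"
    by (rule sum_rev1)
  also have "\<dots> = ?c * (\<Sum>s=1..k-1. H (s-1))"
    unfolding sum_distrib_left by (rule sum.cong[OF refl]) (use k in \<open>auto intro!: arg_cong[where f=H]\<close>)
  finally have B: "(\<Sum>s=1..k-1. \<Sum>x=N-k+s+1..N-1. sin (real x * th) * g x) = ?c * (\<Sum>s=1..k-1. H (s-1))" .
  have C: "(\<Sum>jj=2..k-1. delta k jj * W ?psi jj (N-jj) g) = ?c * (\<Sum>jj=2..k-1. delta k jj * W ?psi jj 0 ?G)"
    unfolding sum_distrib_left
    by (rule sum.cong[OF refl]) (use W_refl[where N=N and th=th and g=g, OF sinN gN] kN in auto)
  show ?thesis unfolding A B C LF_def H_def by (simp add: algebra_simps)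
qed



lemma decomp:
  fixes g :: "nat \<Rightarrow> real"
  assumes sinN: "sin (real N * th) = 0" and g0: "g 0 = 0" and gN: "g N = 0" and k: "1 \<le> k" and kN: "k \<le> N"
  shows "- ((\<Sum>p=0..N-k. W (\<lambda>t. sin (t*th)) k p g)
        + (\<Sum>jj=2..k-1. delta k jj * (W (\<lambda>t. sin (t*th)) jj 0 g + W (\<lambda>t. sin (t*th)) jj (N-jj) g)))
      - lamb k th * (\<Sum>x=1..N-1. g x * sin (real x * th))
    = LF (\<lambda>t. sin (t*th)) k g + (- cos (real N * th)) * LF (\<lambda>t. sin (t*th)) k (\<lambda>u. g (N-u))"
proof -
  let ?psi = "\<lambda>t. sin (t*th)"
  define P where "P x = g x * Pf ?psi k x" for x
  define Q where "Q x = g x * Qf ?psi k x" for x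
  define M where "M x = sin (real x * th) * g x" for x
  define S where "S = (\<Sum>x=1..N-1. M x)"
  have F1: "(\<Sum>x=1..N-1. P x) = (\<Sum>x=1..N-k. P x) + (\<Sum>x=N-k+1..N-1. P x)"
    by (rule sum_split_cl) (use k kN in auto)
  have F2: "(\<Sum>x=1..N-1. Q x) = (\<Sum>x=1..k-1. Q x) + (\<Sum>x=k..N-1. Q x)"
    using sum_split_cl[of 1 "k-1" "N-1" Q] k kN by simp
  have F3: "(\<Sum>x=1..N-1. P x) + (\<Sum>x=1..N-1. Q x) = (real k - 1) * S - lamb k th * S"
  proof -
    have "(\<Sum>x=1..N-1. P x) + (\<Sum>x=1..N-1. Q x) = (\<Sum>x=1..N-1. (real k - 1 - lamb k th) * M x)"
      unfolding sum.distrib[symmetric] P_def Q_def M_def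
      by (rule sum.cong[OF refl]) (simp add: distrib_left[symmetric] trig_PQ[OF k])
    then show ?thesis unfolding S_def sum_distrib_left[symmetric] by (simp add: algebra_simps)
  qed
  have F4: "(\<Sum>s=1..k-1. \<Sum>x=s..N-k+s. M x) = (real k - 1) * S - (\<Sum>s=1..k-1. \<Sum>x=1..s-1. M x)
      - (\<Sum>s=1..k-1. \<Sum>x=N-k+s+1..N-1. M x)"
  proof -
    have "(\<Sum>s=1..k-1. \<Sum>x=s..N-k+s. M x) = (\<Sum>s=1..k-1. S - (\<Sum>x=1..s-1. M x) - (\<Sum>x=N-k+s+1..N-1. M x))"
    proof (rule sum.cong[OF refl])
      fix s assume s: "s \<in> {1..k-1}"
      have "S = (\<Sum>x=1..s-1. M x) + (\<Sum>x=s-1+1..N-1. M x)"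
        unfolding S_def by (rule sum_split_cl) (use s kN in auto)
      also have "s - 1 + 1 = s" using s by auto
      also have "(\<Sum>x=s..N-1. M x) = (\<Sum>x=s..N-k+s. M x) + (\<Sum>x=N-k+s+1..N-1. M x)"
        by (rule sum_split_cl) (use s kN in auto)
      finally show "(\<Sum>x=s..N-k+s. M x) = S - (\<Sum>x=1..s-1. M x) - (\<Sum>x=N-k+s+1..N-1. M x)" by simp
    qed
    also have "\<dots> = real (k-1) * S - (\<Sum>s=1..k-1. \<Sum>x=1..s-1. M x) - (\<Sum>s=1..k-1. \<Sum>x=N-k+s+1..N-1. M x)"
      by (simp add: sum_subtractf)
    finally show ?thesis using k by (simp add: of_nat_diff)
  qed
  have B: "(\<Sum>p=0..N-k. W ?psi k p g) = (\<Sum>x=1..N-k. P x) + (\<Sum>x=k..N-1. Q x) - (\<Sum>s=1..k-1. \<Sum>x=s..N-k+s. M x)"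
    unfolding P_def Q_def M_def by (rule bulk[where g=g, OF g0 gN k kN])
  have R: "(\<Sum>x=N-k+1..N-1. P x) - (\<Sum>s=1..k-1. \<Sum>x=N-k+s+1..N-1. M x)
     - (\<Sum>jj=2..k-1. delta k jj * W ?psi jj (N-jj) g)
     = (- cos (real N * th)) * LF ?psi k (\<lambda>u. g (N-u))"
    unfolding P_def M_def by (rule RF_eq[where g=g and N=N and th=th and k=k, OF sinN gN k kN])
  have Lg: "LF ?psi k g = (\<Sum>x=1..k-1. Q x) - (\<Sum>s=1..k-1. \<Sum>x=1..s-1. M x) - (\<Sum>jj=2..k-1. delta k jj * W ?psi jj 0 g)"
    unfolding LF_def Q_def M_def by simp
  have D: "(\<Sum>jj=2..k-1. delta k jj * (W ?psi jj 0 g + W ?psi jj (N-jj) g))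
     = (\<Sum>jj=2..k-1. delta k jj * W ?psi jj 0 g) + (\<Sum>jj=2..k-1. delta k jj * W ?psi jj (N-jj) g)"
    by (simp add: distrib_left sum.distrib)
  have SS: "lamb k th * (\<Sum>x=1..N-1. g x * sin (real x * th)) = lamb k th * S"
    unfolding S_def M_def by (simp add: mult.commute)
  show ?thesis unfolding D SS using F1 F2 F3 F4 B R Lg by linarith
qed



lemma ind_sum_bounds:
  fixes f :: "nat \<Rightarrow> nat" and y :: nat
  shows "0 \<le> (\<Sum>z=a..b. if f z \<le> y then 1 else (0::real))"
    "(\<Sum>z=a..b. if f z \<le> y then 1 else (0::real)) \<le> real (card {a..b})"
proof -
  show "0 \<le> (\<Sum>z=a..b. if f z \<le> y then 1 else (0::real))" by (rule sum_nonneg) simp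
  have "(\<Sum>z=a..b. if f z \<le> y then 1 else (0::real)) \<le> (\<Sum>z=a..b. 1)" by (rule sum_mono) simp
  then show "(\<Sum>z=a..b. if f z \<le> y then 1 else (0::real)) \<le> real (card {a..b})" by simp
qed

lemma cnt_bounds: "0 \<le> cnt \<eta> y x" "cnt \<eta> y x \<le> real x"
  unfolding cnt_def using ind_sum_bounds[where a=1 and b=x and f=\<eta> and y=y] by auto

lemma cnt_N:
  assumes p: "\<eta> permutes {1..N}" and y: "y \<le> N"
  shows "cnt \<eta> y N = real y"
proof -
  have "cnt \<eta> y N = (\<Sum>z\<in>{1..N}. ((\<lambda>l. if l \<le> y then 1 else (0::real)) \<circ> \<eta>) z)"
    unfolding cnt_def by simp
  also have "\<dots> = (\<Sum>z\<in>{1..N}. if z \<le> y then 1 else (0::real))"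
    using sum.permute[OF p, of "\<lambda>l. if l \<le> y then 1 else (0::real)"] by simp
  also have "\<dots> = (\<Sum>z=1..y. if z \<le> y then 1 else (0::real)) + (\<Sum>z=y+1..N. if z \<le> y then 1 else (0::real))"
    by (rule sum_split_cl) (use y in auto)
  also have "\<dots> = real y" by simp
  finally show ?thesis .
qed

lemma height_0: "height N \<eta> 0 y = 0"
  by (simp add: height_def)

lemma height_N:
  assumes "\<eta> permutes {1..N}" "y \<le> N" "0 < N"
  shows "height N \<eta> N y = 0"
  using cnt_N[OF assms(1,2)] assms(3) by (simp add: height_cnt)

lemma height_le:
  assumes "y \<le> N"
  shows "\<bar>height N \<eta> x y\<bar> \<le> real x"
proof -
  have a: "0 \<le> real x * real y / real N" by simp
  have b: "real x * real y / real N \<le> real x"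
  proof (cases "N = 0")
    case True then show ?thesis by simp
  next
    case False
    have "real x * real y \<le> real x * real N" using assms by (intro mult_left_mono) auto
    then show ?thesis using False by (simp add: divide_le_eq)
  qed
  show ?thesis unfolding height_cnt using cnt_bounds[of \<eta> y x] a b by linarith
qed

lemma height_le_refl:
  assumes p: "\<eta> permutes {1..N}" and y: "y \<le> N" and u: "u \<le> N"
  shows "\<bar>height N \<eta> (N-u) y\<bar> \<le> real u"
proof -
  define T where "T = (\<Sum>v=1..u. if \<eta> (N-u+v) \<le> y then 1 else (0::real))"
  have cN: "cnt \<eta> y N = cnt \<eta> y (N-u) + T"
    using cnt_shift[of \<eta> y "N-u" u] u unfolding T_def by simp
  have T: "0 \<le> T" "T \<le> real u" unfolding T_def using ind_sum_bounds[where a=1 and b=u and f="\<lambda>v. \<eta> (N-u+v)" and y=y] by auto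
  have r: "real (N-u) = real N - real u" using u by (simp add: of_nat_diff)
  have Np: "0 < N \<or> u = 0" using u by auto
  show ?thesis
  proof (cases "N = 0")
    case True then show ?thesis using u by (simp add: height_def)
  next
    case False
    have e: "real (N-u) * real y / real N = real y - real u * real y / real N"
      unfolding r using False by (simp add: field_simps)
    have a: "0 \<le> real u * real y / real N" by simp
    have b: "real u * real y / real N \<le> real u"
    proof -
      have "real u * real y \<le> real u * real N" using y by (intro mult_left_mono) auto
      then show ?thesis using False by (simp add: divide_le_eq)
    qed
    show ?thesis unfolding height_cnt e using cN cnt_N[OF p y] T a b by linarith
  qed
qed



lemma bigN:
  fixes \<sigma> :: "nat \<Rightarrow> nat" and N j y k :: nat
  assumes k1: "1 \<le> k" and kN: "k \<le> N" and j: "j \<in> {1..N}" and y: "y \<in> {1..N - 1}" and p: "\<sigma> permutes {1..N}"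
  shows "\<bar>- gen_Lt N k (Phi N j y) \<sigma> - eigval N k j * Phi N j y \<sigma>\<bar> \<le> 2 * pi^3 * real k ^ 6 * real j ^ 3 / real N ^ 3"
proof -
  define th where "th = real j * pi / real N"
  have N0: "0 < N" using j by auto
  have yN: "y \<le> N" using y by auto
  define g where "g x = height N \<sigma> x y" for x
  have psi_eq: "(\<lambda>t. sin (t * real j * pi / real N)) = (\<lambda>t. sin (t * th))"
    by (rule ext) (simp add: th_def mult.assoc)
  have G: "gen_Lt N k (Phi N j y) \<sigma> = (\<Sum>p=0..N-k. W (\<lambda>t. sin (t * th)) k p g)
     + (\<Sum>jj=2..k-1. delta k jj * (W (\<lambda>t. sin (t * th)) jj 0 g + W (\<lambda>t. sin (t * th)) jj (N-jj) g))"
    using gen_Lt_eq[OF k1 kN, of j y \<sigma>] unfolding psi_eq g_def[symmetric] by simp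
  have E: "eigval N k j = lamb k th"
    unfolding eigval_def lamb_def th_def by (simp add: mult.assoc)
  have P: "Phi N j y \<sigma> = (\<Sum>x=1..N-1. g x * sin (real x * th))"
    unfolding Phi_def g_def th_def by (simp add: mult.assoc)
  have sinN: "sin (real N * th) = 0"
  proof -
    have "real N * th = real j * pi" unfolding th_def using N0 by simp
    then show ?thesis by (simp add: sin_npi)
  qed
  have g0: "g 0 = 0" unfolding g_def by (rule height_0)
  have gN: "g N = 0" unfolding g_def by (rule height_N[OF p yN N0])
  note D = decomp[where g=g and N=N and th=th and k=k, OF sinN g0 gN k1 kN]
  have L1: "\<bar>LF (\<lambda>t. sin (t*th)) k g\<bar> \<le> real k ^ 6 * \<bar>th\<bar> ^ 3"
    by (rule LF_bound) (use g0 height_le[OF yN] in \<open>auto simp: g_def\<close>)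
  have L2: "\<bar>LF (\<lambda>t. sin (t*th)) k (\<lambda>u. g (N-u))\<bar> \<le> real k ^ 6 * \<bar>th\<bar> ^ 3"
    by (rule LF_bound) (use gN height_le_refl[OF p yN] kN in \<open>auto simp: g_def\<close>)
  have L2': "\<bar>(- cos (real N * th)) * LF (\<lambda>t. sin (t*th)) k (\<lambda>u. g (N-u))\<bar> \<le> real k ^ 6 * \<bar>th\<bar> ^ 3"
  proof -
    have "\<bar>(- cos (real N * th)) * LF (\<lambda>t. sin (t*th)) k (\<lambda>u. g (N-u))\<bar>
       = \<bar>cos (real N * th)\<bar> * \<bar>LF (\<lambda>t. sin (t*th)) k (\<lambda>u. g (N-u))\<bar>" by (simp add: abs_mult)
    also have "\<dots> \<le> 1 * (real k ^ 6 * \<bar>th\<bar> ^ 3)" using L2 by (intro mult_mono) auto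
    finally show ?thesis by simp
  qed
  have "\<bar>- gen_Lt N k (Phi N j y) \<sigma> - eigval N k j * Phi N j y \<sigma>\<bar>
      = \<bar>LF (\<lambda>t. sin (t*th)) k g + (- cos (real N * th)) * LF (\<lambda>t. sin (t*th)) k (\<lambda>u. g (N-u))\<bar>"
    unfolding G E P D[symmetric] ..
  also have "\<dots> \<le> 2 * (real k ^ 6 * \<bar>th\<bar> ^ 3)" using L1 L2' by linarith
  also have "\<dots> = 2 * pi^3 * real k ^ 6 * real j ^ 3 / real N ^ 3"
    unfolding th_def using N0 by (simp add: power_divide power_mult_distrib field_simps)
  finally show ?thesis .
qed



theorem lemma2p1:
  fixes k :: "nat \<Rightarrow> nat"
  assumes "(\<lambda>N. real (k N)) \<in> o(\<lambda>N. real N)"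
    and "\<forall>N. k N \<ge> 1"
  shows "\<exists>C>0. \<forall>N j y \<sigma>. j \<in> {1..N} \<and> y \<in> {1..N - 1} \<and> \<sigma> permutes {1..N} \<longrightarrow>
     \<bar>- gen_Lt N (k N) (Phi N j y) \<sigma> - eigval N (k N) j * Phi N j y \<sigma>\<bar>
       \<le> C * real (k N) ^ 6 * real j ^ 3 / real N ^ 3"
proof -
  have ev: "eventually (\<lambda>N. norm (real (k N)) \<le> 1 * norm (real N)) at_top"
    using landau_o.smallD[OF assms(1), of 1] by simp
  then obtain N0 where N0: "\<And>N. N \<ge> N0 \<Longrightarrow> k N \<le> N"
    unfolding eventually_at_top_linorder by auto
  define F where "F N j y \<sigma> = \<bar>- gen_Lt N (k N) (Phi N j y) \<sigma> - eigval N (k N) j * Phi N j y \<sigma>\<bar>"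
    for N j y and \<sigma> :: "nat \<Rightarrow> nat"
  define M where "M N = (\<Sum>j\<in>{1..N}. \<Sum>y\<in>{1..N-1}. \<Sum>\<sigma>\<in>{\<sigma>. \<sigma> permutes {1..N}}. F N j y \<sigma>)" for N
  define C where "C = 2 * pi^3 + (\<Sum>N<N0. M N * real N ^ 3)"
  have F0: "0 \<le> F N j y \<sigma>" for N j y \<sigma> unfolding F_def by simp
  have M0: "0 \<le> M N" for N unfolding M_def by (intro sum_nonneg) (simp add: F0)
  have Cpos: "C > 0" unfolding C_def using M0 by (intro add_pos_nonneg) (auto intro: sum_nonneg)
  have main: "F N j y \<sigma> \<le> C * real (k N) ^ 6 * real j ^ 3 / real N ^ 3"
    if j: "j \<in> {1..N}" and y: "y \<in> {1..N - 1}" and p: "\<sigma> permutes {1..N}" for N j y \<sigma>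
  proof -
    have k1: "1 \<le> k N" using assms(2) by simp
    have N1: "1 \<le> N" using j by auto
    have Q0: "0 \<le> real (k N) ^ 6 * real j ^ 3 / real N ^ 3" by simp
    show ?thesis
    proof (cases "N0 \<le> N")
      case True
      have "F N j y \<sigma> \<le> 2 * pi^3 * real (k N) ^ 6 * real j ^ 3 / real N ^ 3"
        unfolding F_def by (rule bigN[OF k1 N0[OF True] j y p])
      also have "\<dots> = 2 * pi^3 * (real (k N) ^ 6 * real j ^ 3 / real N ^ 3)" by simp
      also have "\<dots> \<le> C * (real (k N) ^ 6 * real j ^ 3 / real N ^ 3)"
        unfolding C_def using Q0 M0 by (intro mult_right_mono) (auto intro: sum_nonneg)
      finally show ?thesis by simp
    next
      case False
      then have NN0: "N < N0" by simp
      have fin: "finite {\<sigma>. \<sigma> permutes {1..N}}" by (rule finite_permutations) simp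
      have "F N j y \<sigma> \<le> (\<Sum>\<sigma>\<in>{\<sigma>. \<sigma> permutes {1..N}}. F N j y \<sigma>)"
        by (rule member_le_sum) (use p fin F0 in auto)
      also have "\<dots> \<le> (\<Sum>y\<in>{1..N-1}. \<Sum>\<sigma>\<in>{\<sigma>. \<sigma> permutes {1..N}}. F N j y \<sigma>)"
        by (rule member_le_sum[where f="\<lambda>y. \<Sum>\<sigma>\<in>{\<sigma>. \<sigma> permutes {1..N}}. F N j y \<sigma>"]) (use y in \<open>auto intro: sum_nonneg F0\<close>)
      also have "\<dots> \<le> M N"
        unfolding M_def
        by (rule member_le_sum[where f="\<lambda>j. \<Sum>y\<in>{1..N-1}. \<Sum>\<sigma>\<in>{\<sigma>. \<sigma> permutes {1..N}}. F N j y \<sigma>"]) (use j in \<open>auto intro: sum_nonneg F0\<close>)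
      finally have FM: "F N j y \<sigma> \<le> M N" .
      have MC: "M N * real N ^ 3 \<le> C"
      proof -
        have "M N * real N ^ 3 \<le> (\<Sum>N<N0. M N * real N ^ 3)"
          by (rule member_le_sum) (use NN0 M0 in auto)
        moreover have "0 \<le> 2 * pi^3" by simp
        ultimately show ?thesis unfolding C_def by linarith
      qed
      have kj: "1 \<le> real (k N) ^ 6 * real j ^ 3"
      proof -
        have "1 \<le> real (k N) ^ 6" using k1 by simp
        moreover have "1 \<le> real j ^ 3" using j by simp
        ultimately show ?thesis using mult_mono[of 1 "real (k N) ^ 6" 1 "real j ^ 3"] by simp
      qed
      have Npos: "0 < real N ^ 3" using N1 by simp
      have "M N = (M N * real N ^ 3) * 1 / real N ^ 3" using Npos by simp
      also have "\<dots> \<le> C * (real (k N) ^ 6 * real j ^ 3) / real N ^ 3"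
        using MC kj M0 Npos Cpos by (intro divide_right_mono mult_mono) auto
      finally show ?thesis using FM by (simp add: mult.assoc)
    qed
  qed
  show ?thesis using Cpos main unfolding F_def by blast
qed


end
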